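(* Let $X=[0,1]^d$, let $Y$ be a convex subset of a finite-dimensional normed space with norm $\|\cdot\|_Y$, let $\mathcal{M}\subset X$ be a compact smooth embedded manifold, $\rho$ a probability density on $\mathcal{M}$, and $y:X\to Y$ the label function. Let $\ell:Y\times Y\to\mathbb{R}$ be strongly convex with parameter $\theta>0$, i.e. $\ell(ty_1+(1-t)y_2,y_0)+\tfrac{\theta}{2}t(1-t)\|y_1-y_2\|_Y^2\le t\ell(y_1,y_0)+(1-t)\ell(y_2,y_0)$ for all $y_0,y_1,y_2\in Y$, $t\in[0,1]$. Fix $\lambda>0$ and let $J[u]=\int_{\mathcal{M}}\ell(u(x),y(x))\rho\,dVol(x)+\lambda\,\mathrm{Lip}(u)$. If $u^\lambda\in W^{1,\infty}(X;Y)$ is a minimizer of $J$ and $u\in W^{1,\infty}(X;Y)$, then $$\frac{\theta}{2}\int_{\mathcal{M}}\|u-u^\lambda\|_Y^2\rho\,dVol(x)\le J[u]-J[u^\lambda].$$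
   Context: $W^{1,\infty}(X;Y)$ is the space of Lipschitz maps $X\to Y$; $\mathrm{Lip}(u)$ is the Lipschitz constant of $u$. *)

theory Defs
  imports "HOL-Analysis.Analysis" "HOL-Probability.Probability"
begin

definition unit_cube :: "(real^'d) set" where
  "unit_cube = {x. \<forall>i. 0 \<le> x $ i \<and> x $ i \<le> 1}"

definition W1inf :: "'a::metric_space set \<Rightarrow> 'b::metric_space set \<Rightarrow> ('a \<Rightarrow> 'b) set" where
  "W1inf X Y = {u. u ` X \<subseteq> Y \<and> (\<exists>L. L-lipschitz_on X u)}"

definition Lip :: "'a::metric_space set \<Rightarrow> ('a \<Rightarrow> 'b::metric_space) \<Rightarrow> real" where
  "Lip X u = Inf {L. L-lipschitz_on X u}"

definition strongly_convex_loss ::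
  "'b::real_normed_vector set \<Rightarrow> real \<Rightarrow> ('b \<Rightarrow> 'b \<Rightarrow> real) \<Rightarrow> bool" where
  "strongly_convex_loss Y \<theta> loss \<longleftrightarrow>
     (\<forall>y0\<in>Y. \<forall>y1\<in>Y. \<forall>y2\<in>Y. \<forall>t::real. 0 \<le> t \<and> t \<le> 1 \<longrightarrow>
        loss (t *\<^sub>R y1 + (1 - t) *\<^sub>R y2) y0 + \<theta> / 2 * t * (1 - t) * (norm (y1 - y2))\<^sup>2
          \<le> t * loss y1 y0 + (1 - t) * loss y2 y0)"

text \<open>The functional J[u] = int_M l(u(x),y(x)) rho dVol + lambda Lip(u), where
  mu = density vol rho is the measure rho dVol on M.\<close>
definition Jfun :: "'a::metric_space set \<Rightarrow> 'a measure \<Rightarrow> ('b::metric_space \<Rightarrow> 'b \<Rightarrow> real)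
      \<Rightarrow> ('a \<Rightarrow> 'b) \<Rightarrow> real \<Rightarrow> ('a \<Rightarrow> 'b) \<Rightarrow> real" where
  "Jfun X \<mu> loss ylab lam u = (\<integral>x. loss (u x) (ylab x) \<partial>\<mu>) + lam * Lip X u"

end

theory Submission
  imports Defs
begin

lemma Lip_attained:
  fixes u :: "'a::metric_space \<Rightarrow> 'b::metric_space"
  assumes "L-lipschitz_on X u"
  shows "(Lip X u)-lipschitz_on X u"
proof -
  have ne: "{L. L-lipschitz_on X u} \<noteq> {}" using assms by blast
  have bdd: "bdd_below {L. L-lipschitz_on X u}"
    by (rule bdd_belowI[of _ 0]) (auto simp: lipschitz_on_def)
  have nn: "0 \<le> Lip X u" unfolding Lip_def
    by (rule cInf_greatest[OF ne]) (auto simp: lipschitz_on_def)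
  show ?thesis
  proof (rule lipschitz_onI)
    fix x y assume xy: "x \<in> X" "y \<in> X"
    show "dist (u x) (u y) \<le> Lip X u * dist x y"
    proof (cases "dist x y = 0")
      case True
      then have "x = y" by simp
      then show ?thesis by simp
    next
      case False
      then have dp: "dist x y > 0" by simp
      have "dist (u x) (u y) / dist x y \<le> Lip X u" unfolding Lip_def
      proof (rule cInf_greatest[OF ne])
        fix L assume "L \<in> {L. L-lipschitz_on X u}"
        then have "dist (u x) (u y) \<le> L * dist x y" using xy by (auto simp: lipschitz_on_def)
        then show "dist (u x) (u y) / dist x y \<le> L" using dp by (simp add: divide_le_eq)
      qed
      then show ?thesis using dp by (simp add: divide_le_eq)
    qed
  qed (rule nn)
qed

lemma Lip_le:
  fixes u :: "'a::metric_space \<Rightarrow> 'b::metric_space"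
  assumes "L-lipschitz_on X u"
  shows "Lip X u \<le> L"
  unfolding Lip_def
  by (rule cInf_lower) (use assms in \<open>auto intro!: bdd_belowI[of _ 0] simp: lipschitz_on_def\<close>)

lemma comb_lip:
  fixes u w :: "'a::metric_space \<Rightarrow> 'b::real_normed_vector"
  assumes "L1-lipschitz_on X u" "L2-lipschitz_on X w" "0 \<le> t" "t \<le> 1"
  shows "(t * L1 + (1 - t) * L2)-lipschitz_on X (\<lambda>x. t *\<^sub>R u x + (1 - t) *\<^sub>R w x)"
proof (rule lipschitz_onI)
  fix x y assume xy: "x \<in> X" "y \<in> X"
  have a: "norm (u x - u y) \<le> L1 * dist x y" using assms(1) xy by (auto simp: lipschitz_on_def dist_norm)
  have b: "norm (w x - w y) \<le> L2 * dist x y" using assms(2) xy by (auto simp: lipschitz_on_def dist_norm)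
  have "dist (t *\<^sub>R u x + (1 - t) *\<^sub>R w x) (t *\<^sub>R u y + (1 - t) *\<^sub>R w y)
      = norm (t *\<^sub>R (u x - u y) + (1 - t) *\<^sub>R (w x - w y))"
    by (simp add: dist_norm algebra_simps)
  also have "\<dots> \<le> norm (t *\<^sub>R (u x - u y)) + norm ((1 - t) *\<^sub>R (w x - w y))"
    by (rule norm_triangle_ineq)
  also have "\<dots> = t * norm (u x - u y) + (1 - t) * norm (w x - w y)"
    using assms(3,4) by simp
  also have "\<dots> \<le> t * (L1 * dist x y) + (1 - t) * (L2 * dist x y)"
    using a b assms(3,4) by (intro add_mono mult_left_mono) auto
  finally show "dist (t *\<^sub>R u x + (1 - t) *\<^sub>R w x) (t *\<^sub>R u y + (1 - t) *\<^sub>R w y)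
      \<le> (t * L1 + (1 - t) * L2) * dist x y" by (simp add: algebra_simps)
next
  show "0 \<le> t * L1 + (1 - t) * L2"
    using assms by (auto intro!: add_nonneg_nonneg mult_nonneg_nonneg simp: lipschitz_on_def)
qed

lemma limit_arg:
  fixes a D :: real
  assumes "0 \<le> D" "\<And>t. 0 < t \<Longrightarrow> t < 1 \<Longrightarrow> (1 - t) * a \<le> D"
  shows "a \<le> D"
proof (rule ccontr)
  assume "\<not> a \<le> D"
  then have ad: "a > D" by simp
  then have ap: "a > 0" using assms(1) by simp
  define t where "t = (a - D) / (2 * a)"
  have t0: "0 < t" using ad ap by (simp add: t_def)
  have t1: "t < 1" using ad ap assms(1) by (simp add: t_def divide_less_eq)
  have "(1 - t) * a = a - (a - D) / 2" using ap by (simp add: t_def field_simps)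
  also have "\<dots> > D" using ad by (simp add: field_simps)
  finally show False using assms(2)[OF t0 t1] by simp
qed

theorem mainTheorem8:
  fixes Y :: "'b::real_normed_vector set"
    and M :: "(real^'d) set"
    and vol :: "(real^'d) measure"
    and \<rho> :: "real^'d \<Rightarrow> real"
    and ylab :: "real^'d \<Rightarrow> 'b"
    and loss :: "'b \<Rightarrow> 'b \<Rightarrow> real"
    and \<theta> lam :: real
    and u ulam :: "real^'d \<Rightarrow> 'b"
  assumes findim: "\<exists>B::'b set. finite B \<and> span B = UNIV"
    and Yconv: "convex Y"
    and Mcompact: "compact M" and MX: "M \<subseteq> unit_cube"
    and vol_space: "space vol = M"
    and vol_sets: "sets vol = sets (restrict_space borel M)"
    and \<rho>_meas: "\<rho> \<in> borel_measurable vol"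
    and \<rho>_nonneg: "\<And>x. x \<in> M \<Longrightarrow> 0 \<le> \<rho> x"
    and \<rho>_prob: "prob_space (density vol (\<lambda>x. ennreal (\<rho> x)))"
    and ylab_Y: "\<And>x. x \<in> unit_cube \<Longrightarrow> ylab x \<in> Y"
    and \<theta>_pos: "\<theta> > 0"
    and loss_sc: "strongly_convex_loss Y \<theta> loss"
    and loss_int: "\<And>v. v \<in> W1inf unit_cube Y \<Longrightarrow>
        integrable (density vol (\<lambda>x. ennreal (\<rho> x))) (\<lambda>x. loss (v x) (ylab x))"
    and lam_pos: "lam > 0"
    and ulam_W: "ulam \<in> W1inf unit_cube Y"
    and ulam_min: "\<And>v. v \<in> W1inf unit_cube Y \<Longrightarrow>
        Jfun unit_cube (density vol (\<lambda>x. ennreal (\<rho> x))) loss ylab lam ulam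
          \<le> Jfun unit_cube (density vol (\<lambda>x. ennreal (\<rho> x))) loss ylab lam v"
    and u_W: "u \<in> W1inf unit_cube Y"
  shows "\<theta> / 2 * (\<integral>x. (norm (u x - ulam x))\<^sup>2 \<partial>(density vol (\<lambda>x. ennreal (\<rho> x))))
     \<le> Jfun unit_cube (density vol (\<lambda>x. ennreal (\<rho> x))) loss ylab lam u
        - Jfun unit_cube (density vol (\<lambda>x. ennreal (\<rho> x))) loss ylab lam ulam"
proof -
  define \<mu> where "\<mu> = density vol (\<lambda>x. ennreal (\<rho> x))"
  define J where "J = Jfun unit_cube \<mu> loss ylab lam"
  define I where "I = (\<integral>x. (norm (u x - ulam x))\<^sup>2 \<partial>\<mu>)"
  define X :: "(real^'d) set" where "X = unit_cube"
  have spc: "space \<mu> = M" by (simp add: \<mu>_def vol_space)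
  have D0: "0 \<le> J u - J ulam" using ulam_min[OF u_W] by (simp add: J_def \<mu>_def)
  have I0: "0 \<le> I" unfolding I_def by simp
  obtain L1 where L1: "L1-lipschitz_on X u" and uY: "u ` X \<subseteq> Y" using u_W by (auto simp: W1inf_def X_def)
  obtain L2 where L2: "L2-lipschitz_on X ulam" and ulY: "ulam ` X \<subseteq> Y" using ulam_W by (auto simp: W1inf_def X_def)
  have Lu: "(Lip X u)-lipschitz_on X u" by (rule Lip_attained[OF L1])
  have Lul: "(Lip X ulam)-lipschitz_on X ulam" by (rule Lip_attained[OF L2])
  have iu: "integrable \<mu> (\<lambda>x. loss (u x) (ylab x))" using loss_int[OF u_W] by (simp add: \<mu>_def)
  have iul: "integrable \<mu> (\<lambda>x. loss (ulam x) (ylab x))" using loss_int[OF ulam_W] by (simp add: \<mu>_def)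
  show ?thesis
  proof (cases "integrable \<mu> (\<lambda>x. (norm (u x - ulam x))\<^sup>2)")
    case False
    then have "I = 0" unfolding I_def by (rule not_integrable_integral_eq)
    then show ?thesis using D0 by (simp add: I_def J_def \<mu>_def)
  next
    case True
    have key: "(1 - t) * (\<theta> / 2 * I) \<le> J u - J ulam" if t: "0 < t" "t < 1" for t
    proof -
      define v where "v = (\<lambda>x. t *\<^sub>R u x + (1 - t) *\<^sub>R ulam x)"
      have vlip: "(t * Lip X u + (1 - t) * Lip X ulam)-lipschitz_on X v"
        unfolding v_def using comb_lip[OF Lu Lul] t by simp
      have vY: "v ` X \<subseteq> Y"
      proof
        fix z assume "z \<in> v ` X"
        then obtain x where x: "x \<in> X" "z = v x" by auto
        have "u x \<in> Y" "ulam x \<in> Y" using x uY ulY by auto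
        then show "z \<in> Y" using Yconv t x unfolding convex_def v_def by auto
      qed
      have vW: "v \<in> W1inf unit_cube Y" using vlip vY by (auto simp: W1inf_def X_def)
      have iv: "integrable \<mu> (\<lambda>x. loss (v x) (ylab x))" using loss_int[OF vW] by (simp add: \<mu>_def)
      have pw: "loss (v x) (ylab x) + \<theta> / 2 * t * (1 - t) * (norm (u x - ulam x))\<^sup>2
          \<le> t * loss (u x) (ylab x) + (1 - t) * loss (ulam x) (ylab x)" if x: "x \<in> space \<mu>" for x
      proof -
        have xX: "x \<in> X" using x spc MX by (auto simp: X_def)
        have "u x \<in> Y" "ulam x \<in> Y" "ylab x \<in> Y" using xX uY ulY ylab_Y by (auto simp: X_def)
        then show ?thesis using loss_sc t unfolding strongly_convex_loss_def v_def by auto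
      qed
      have "(\<integral>x. loss (v x) (ylab x) + \<theta> / 2 * t * (1 - t) * (norm (u x - ulam x))\<^sup>2 \<partial>\<mu>)
          \<le> (\<integral>x. t * loss (u x) (ylab x) + (1 - t) * loss (ulam x) (ylab x) \<partial>\<mu>)"
        by (rule integral_mono) (use iv True iu iul pw in auto)
      then have ineq: "(\<integral>x. loss (v x) (ylab x) \<partial>\<mu>) + \<theta> / 2 * t * (1 - t) * I
          \<le> t * (\<integral>x. loss (u x) (ylab x) \<partial>\<mu>) + (1 - t) * (\<integral>x. loss (ulam x) (ylab x) \<partial>\<mu>)"
        using iv True iu iul by (simp add: I_def)
      have Lv: "Lip X v \<le> t * Lip X u + (1 - t) * Lip X ulam" by (rule Lip_le[OF vlip])
      have "J ulam \<le> J v" using ulam_min[OF vW] by (simp add: J_def \<mu>_def)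
      also have "\<dots> = (\<integral>x. loss (v x) (ylab x) \<partial>\<mu>) + lam * Lip X v" by (simp add: J_def Jfun_def X_def)
      also have "\<dots> \<le> (\<integral>x. loss (v x) (ylab x) \<partial>\<mu>) + lam * (t * Lip X u + (1 - t) * Lip X ulam)"
        using Lv lam_pos by simp
      finally have "J ulam \<le> t * J u + (1 - t) * J ulam - \<theta> / 2 * t * (1 - t) * I"
        using ineq by (simp add: J_def Jfun_def X_def algebra_simps)
      then have "t * ((1 - t) * (\<theta> / 2 * I)) \<le> t * (J u - J ulam)"
        by (simp add: algebra_simps)
      then show ?thesis using t by simp
    qed
    have "\<theta> / 2 * I \<le> J u - J ulam" by (rule limit_arg[OF D0 key])
    then show ?thesis by (simp add: I_def J_def \<mu>_def)
  qed
qed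

end
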